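(* Let $\{i,j,k\}=\{1,2,3\}$ and $n\ge0$. Then: 1. The atomic element $a^{ij}_n$ is $\varphi_i$-homomorphic and $\varphi_j$-homomorphic. 2. The atomic element $A^{ij}_n$ is $\varphi_i$-homomorphic. 3. The atomic element $A^{ij}_n$ is $(\varphi_j,y_k)$-homomorphic.
   Context: $D^{2,2,2}$ is the modular lattice generated by $x_1,y_1,x_2,y_2,x_3,y_3$ subject only to $x_i\subseteq y_i$ ($i=1,2,3$), with a greatest element $I$ adjoined. Meet is written $ab$, join $a+b$. Atomic elements: for distinct $i,j$, let $k$ denote the third index. Define - $a^{ij}_0=I$ and $a^{ij}_n=x_i+y_ja^{jk}_{n-1}$ for $n\ge1$; - $A^{ij}_0=I$ and $A^{ij}_n=y_i+x_jA^{ki}_{n-1}$ for $n\ge1$. A representation $\rho$ of $D^{2,2,2}$ in a finite-dimensional vector space $X_0$ is a lattice morphism from $D^{2,2,2}$ to the subspace lattice of $X_0$, with $\rho(I)=X_0$. Write $X_i=\rho(x_i)\subseteq Y_i=\rho(y_i)$. Put $R=Y_1\oplus Y_2\oplus Y_3$ and $X^1_0=\{(\eta_1,\eta_2,\eta_3)\in R:\sum\eta_i=0\}$. Let $G'_i\subseteq R$ be the triples with $i$-th coordinate in $X_i$, and $H'_i\subseteq R$ the triples with $i$-th coordinate $0$. $\Phi^+\rho$ is the representation in $X^1_0$ with $\Phi^+\rho(y_i)=G'_i\cap X^1_0$, $\Phi^+\rho(x_i)=H'_i\cap X^1_0$, $\Phi^+\rho(I)=X^1_0$. The elementary map $\varphi_i:X^1_0\to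 X_0$ is $(\eta_1,\eta_2,\eta_3)\mapsto\eta_i$; $\varphi_i(S)$ denotes the image of a subspace $S$. An element $a\in D^{2,2,2}$ is $\varphi_i$-homomorphic if, for every representation $\rho$ and every $p\in D^{2,2,2}$, $$\varphi_i(\Phi^+\rho(ap))=\varphi_i(\Phi^+\rho(a))\cap\varphi_i(\Phi^+\rho(p)).$$ An element $a$ is $(\varphi_i,y_k)$-homomorphic if, for every representation $\rho$ and every $p\in D^{2,2,2}$ with $p\subseteq y_k$, $$\varphi_i(\Phi^+\rho(ap))=\varphi_i(\Phi^+\rho(y_ka))\cap\varphi_i(\Phi^+\rho(p)).$$ *)

theory Defs
  imports Main "HOL.Vector_Spaces" "HOL-Library.Product_Plus"
begin

text \<open>Lattice terms over the generators x_i, y_i (i = 1,2,3) and the adjoined top I.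
  Meet ab is Meet a b, join a+b is Join a b.\<close>
datatype lterm = Gx nat | Gy nat | Top | Meet lterm lterm | Join lterm lterm

text \<open>Terms using only the generators with indices 1, 2, 3 (= elements of D^{2,2,2}).\<close>
fun wf_term :: "lterm \<Rightarrow> bool" where
  "wf_term (Gx i) = (i \<in> {1,2,3})"
| "wf_term (Gy i) = (i \<in> {1,2,3})"
| "wf_term Top = True"
| "wf_term (Meet p q) = (wf_term p \<and> wf_term q)"
| "wf_term (Join p q) = (wf_term p \<and> wf_term q)"

text \<open>The order of D^{2,2,2}: the least preorder on terms making the quotient a
  modular lattice with greatest element Top in which x_i \<le> y_i.
  Thus p \<le> q holds in D^{2,2,2} iff dleq p q.\<close>
inductive dleq :: "lterm \<Rightarrow> lterm \<Rightarrow> bool" where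
  refl: "dleq p p"
| trans: "dleq p q \<Longrightarrow> dleq q r \<Longrightarrow> dleq p r"
| meet_l: "dleq (Meet p q) p"
| meet_r: "dleq (Meet p q) q"
| meet_glb: "dleq r p \<Longrightarrow> dleq r q \<Longrightarrow> dleq r (Meet p q)"
| join_l: "dleq p (Join p q)"
| join_r: "dleq q (Join p q)"
| join_lub: "dleq p r \<Longrightarrow> dleq q r \<Longrightarrow> dleq (Join p q) r"
| top: "dleq p Top"
| gen: "i \<in> {1,2,3} \<Longrightarrow> dleq (Gx i) (Gy i)"
| modular: "dleq a c \<Longrightarrow> dleq (Meet (Join a b) c) (Join a (Meet b c))"

text \<open>Third index k of distinct i, j in {1,2,3}.\<close>
definition third :: "nat \<Rightarrow> nat \<Rightarrow> nat" where
  "third i j = 6 - i - j"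

fun atom_a :: "nat \<Rightarrow> nat \<Rightarrow> nat \<Rightarrow> lterm" where
  "atom_a i j 0 = Top"
| "atom_a i j (Suc n) = Join (Gx i) (Meet (Gy j) (atom_a j (third i j) n))"

fun atom_A :: "nat \<Rightarrow> nat \<Rightarrow> nat \<Rightarrow> lterm" where
  "atom_A i j 0 = Top"
| "atom_A i j (Suc n) = Join (Gy i) (Meet (Gx j) (atom_A (third i j) i n))"

definition ssum :: "'w::plus set \<Rightarrow> 'w set \<Rightarrow> 'w set" where
  "ssum A B = {u + v | u v. u \<in> A \<and> v \<in> B}"

fun eval :: "'w::plus set \<Rightarrow> (nat \<Rightarrow> 'w set) \<Rightarrow> (nat \<Rightarrow> 'w set) \<Rightarrow> lterm \<Rightarrow> 'w set" where
  "eval T X Y (Gx i) = X i"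
| "eval T X Y (Gy i) = Y i"
| "eval T X Y Top = T"
| "eval T X Y (Meet p q) = eval T X Y p \<inter> eval T X Y q"
| "eval T X Y (Join p q) = ssum (eval T X Y p) (eval T X Y q)"

text \<open>A representation of D^{2,2,2} in the finite-dimensional space UNIV :: 'v
  (over the field 'k with scalar multiplication scale, basis B).\<close>
definition is_rep :: "('k::field \<Rightarrow> 'v::ab_group_add \<Rightarrow> 'v) \<Rightarrow> 'v set
     \<Rightarrow> (nat \<Rightarrow> 'v set) \<Rightarrow> (nat \<Rightarrow> 'v set) \<Rightarrow> bool" where
  "is_rep scale B X Y \<longleftrightarrow> finite_dimensional_vector_space scale B \<and>
     (\<forall>i\<in>{1,2,3}. module.subspace scale (X i) \<and> module.subspace scale (Y i) \<and> X i \<subseteq> Y i)"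

text \<open>The i-th coordinate of a triple (the elementary map phi_i).\<close>
definition coord :: "nat \<Rightarrow> 'v \<times> 'v \<times> 'v \<Rightarrow> 'v" where
  "coord i t = (if i = 1 then fst t else if i = 2 then fst (snd t) else snd (snd t))"

definition X01 :: "(nat \<Rightarrow> 'v::ab_group_add set) \<Rightarrow> ('v \<times> 'v \<times> 'v) set" where
  "X01 Y = {t. (\<forall>i\<in>{1,2,3}. coord i t \<in> Y i) \<and> fst t + fst (snd t) + snd (snd t) = 0}"

definition phiY :: "(nat \<Rightarrow> 'v::ab_group_add set) \<Rightarrow> (nat \<Rightarrow> 'v set) \<Rightarrow> nat \<Rightarrow> ('v \<times> 'v \<times> 'v) set" where
  "phiY X Y i = {t \<in> X01 Y. coord i t \<in> X i}"

definition phiX :: "(nat \<Rightarrow> 'v::ab_group_add set) \<Rightarrow> nat \<Rightarrow> ('v \<times> 'v \<times> 'v) set" where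
  "phiX Y i = {t \<in> X01 Y. coord i t = 0}"

definition PhiP :: "(nat \<Rightarrow> 'v::ab_group_add set) \<Rightarrow> (nat \<Rightarrow> 'v set) \<Rightarrow> lterm \<Rightarrow> ('v \<times> 'v \<times> 'v) set" where
  "PhiP X Y p = eval (X01 Y) (phiX Y) (phiY X Y) p"

end

theory Submission
  imports Defs
begin

definition grp :: "'w::ab_group_add set \<Rightarrow> bool" where
  "grp S \<longleftrightarrow> 0 \<in> S \<and> (\<forall>a\<in>S. \<forall>b\<in>S. a + b \<in> S) \<and> (\<forall>a\<in>S. \<forall>b\<in>S. a - b \<in> S)"

lemma grp_ssum: "grp A \<Longrightarrow> grp B \<Longrightarrow> grp (ssum A B)"
  unfolding grp_def ssum_def
proof (intro conjI ballI)
  assume a: "0 \<in> A \<and> (\<forall>a\<in>A. \<forall>b\<in>A. a + b \<in> A) \<and> (\<forall>a\<in>A. \<forall>b\<in>A. a - b \<in> A)"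
     and b: "0 \<in> B \<and> (\<forall>a\<in>B. \<forall>b\<in>B. a + b \<in> B) \<and> (\<forall>a\<in>B. \<forall>b\<in>B. a - b \<in> B)"
  show "0 \<in> {u + v |u v. u \<in> A \<and> v \<in> B}" using a b by force
  fix x y assume x: "x \<in> {u + v |u v. u \<in> A \<and> v \<in> B}" and y: "y \<in> {u + v |u v. u \<in> A \<and> v \<in> B}"
  then obtain u v u' v' where "x = u + v" "y = u' + v'" "u \<in> A" "v \<in> B" "u' \<in> A" "v' \<in> B" by blast
  moreover have "x + y = (u + u') + (v + v')" "x - y = (u - u') + (v - v')"
    using calculation by (simp_all add: algebra_simps)
  ultimately show "x + y \<in> {u + v |u v. u \<in> A \<and> v \<in> B}" "x - y \<in> {u + v |u v. u \<in> A \<and> v \<in> B}"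
    using a b by blast+
qed

lemma grp_Int: "grp A \<Longrightarrow> grp B \<Longrightarrow> grp (A \<inter> B)"
  unfolding grp_def by blast

lemma ssum_sub: "grp T \<Longrightarrow> A \<subseteq> T \<Longrightarrow> B \<subseteq> T \<Longrightarrow> ssum A B \<subseteq> T"
  unfolding grp_def ssum_def by blast

lemma eval_grp:
  assumes "grp T" "\<And>i. grp (Xs i) \<and> Xs i \<subseteq> T" "\<And>i. grp (Ys i) \<and> Ys i \<subseteq> T"
  shows "grp (eval T Xs Ys p) \<and> eval T Xs Ys p \<subseteq> T"
proof (induction p)
  case (Join p1 p2)
  then show ?case using grp_ssum[of "eval T Xs Ys p1" "eval T Xs Ys p2"] ssum_sub[OF assms(1), of "eval T Xs Ys p1" "eval T Xs Ys p2"] by simp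
qed (use assms grp_Int in auto)

lemma dleq_sound:
  assumes "dleq p q" "grp T" "\<And>i. grp (Xs i) \<and> Xs i \<subseteq> T" "\<And>i. grp (Ys i) \<and> Ys i \<subseteq> T"
    "\<And>i. i \<in> {1,2,3} \<Longrightarrow> Xs i \<subseteq> Ys i"
  shows "eval T Xs Ys p \<subseteq> eval T Xs Ys q"
proof -
  have EG: "\<And>r. grp (eval T Xs Ys r) \<and> eval T Xs Ys r \<subseteq> T"
    by (rule eval_grp[OF assms(2)]) (use assms(3,4) in auto)
  show ?thesis using assms(1)
proof (induction rule: dleq.induct)
  case (refl p)
  show ?case by (rule order_refl)
next
  case (trans p q r)
  then show ?case by (meson order_trans)
next
  case (meet_l p q)
  show ?case by simp
next
  case (meet_r p q)
  show ?case by simp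
next
  case (meet_glb r p q)
  then show ?case by simp
next
  case (join_l p q)
  have "0 \<in> eval T Xs Ys q" using EG unfolding grp_def by blast
  then show ?case unfolding eval.simps ssum_def by force
next
  case (join_r q p)
  have "0 \<in> eval T Xs Ys p" using EG unfolding grp_def by blast
  then show ?case unfolding eval.simps ssum_def by force
next
  case (join_lub p r q)
  have "grp (eval T Xs Ys r)" using EG by blast
  then show ?case unfolding eval.simps using join_lub.IH unfolding ssum_def grp_def by blast
next
  case (top p)
  then show ?case using EG by simp
next
  case (gen i)
  then show ?case using assms(5) by simp
next
  case (modular a c b)
  have g: "grp (eval T Xs Ys c)" using EG by blast
  show ?case
  proof
    fix x assume "x \<in> eval T Xs Ys (Meet (Join a b) c)"
    then obtain u v where uv: "x = u + v" "u \<in> eval T Xs Ys a" "v \<in> eval T Xs Ys b" "x \<in> eval T Xs Ys c"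
      unfolding eval.simps ssum_def by blast
    have "u \<in> eval T Xs Ys c" using uv modular.IH by blast
    then have "x - u \<in> eval T Xs Ys c" using g uv unfolding grp_def by blast
    moreover have "x - u = v" using uv by simp
    ultimately show "x \<in> eval T Xs Ys (Join a (Meet b c))"
      using uv unfolding eval.simps ssum_def by blast
  qed
qed
qed

lemma eval_cong:
  assumes "wf_term p" "\<And>i. i \<in> {1,2,3} \<Longrightarrow> Xs i = X' i" "\<And>i. i \<in> {1,2,3} \<Longrightarrow> Ys i = Y' i"
  shows "eval T Xs Ys p = eval T X' Y' p"
  using assms by (induction p) auto

lemma coord_diff: "coord i (a - b) = coord i a - coord i (b::'v::ab_group_add \<times> 'v \<times> 'v)"
  unfolding coord_def by auto

lemma coord_add: "coord i (a + b) = coord i a + coord i (b::'v::ab_group_add \<times> 'v \<times> 'v)"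
  unfolding coord_def by auto

lemma coord_zero: "coord i (0::'v::ab_group_add \<times> 'v \<times> 'v) = 0"
  unfolding coord_def by auto

lemma hom_lemma:
  assumes "\<And>a b. a \<in> A \<Longrightarrow> b \<in> P \<Longrightarrow> coord i a = coord i b \<Longrightarrow> b \<in> A"
  shows "coord i ` (A \<inter> P) = coord i ` A \<inter> coord i ` P"
proof
  show "coord i ` (A \<inter> P) \<subseteq> coord i ` A \<inter> coord i ` P" by blast
  show "coord i ` A \<inter> coord i ` P \<subseteq> coord i ` (A \<inter> P)"
  proof
    fix v assume "v \<in> coord i ` A \<inter> coord i ` P"
    then obtain a b where "a \<in> A" "b \<in> P" "v = coord i a" "v = coord i b" by blast
    then show "v \<in> coord i ` (A \<inter> P)" using assms by blast
  qed
qed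

lemma third_props:
  assumes "i \<in> {1,2,3::nat}" "j \<in> {1,2,3}" "i \<noteq> j"
  shows "third i j \<in> {1,2,3}" "third i j \<noteq> i" "third i j \<noteq> j"
    "third j (third i j) = i" "third (third i j) i = j"
  using assms unfolding third_def by auto

lemma wf_atom_a: "i \<in> {1,2,3} \<Longrightarrow> j \<in> {1,2,3} \<Longrightarrow> i \<noteq> j \<Longrightarrow> wf_term (atom_a i j n)"
proof (induction n arbitrary: i j)
  case (Suc n)
  then show ?case using third_props[of i j] by auto
qed simp

lemma wf_atom_A: "i \<in> {1,2,3} \<Longrightarrow> j \<in> {1,2,3} \<Longrightarrow> i \<noteq> j \<Longrightarrow> wf_term (atom_A i j n)"
proof (induction n arbitrary: i j)
  case (Suc n)
  then show ?case using third_props[of i j] by auto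
qed simp

lemma le_a_x: "dleq (Gx i) (atom_a i j n)"
  by (cases n) (simp_all add: dleq.top dleq.join_l)

lemma le_a_xj: assumes "j \<in> {1,2,3}" shows "dleq (Gx j) (atom_a i j n)"
proof (cases n)
  case (Suc m)
  have h: "dleq (Gx j) (Meet (Gy j) (atom_a j (third i j) m))"
    by (rule dleq.meet_glb[OF dleq.gen[OF assms] le_a_x])
  show ?thesis unfolding Suc atom_a.simps by (rule dleq.trans[OF h dleq.join_r])
qed (simp add: dleq.top)

lemma le_A_y: "dleq (Gy i) (atom_A i j n)"
  by (cases n) (simp_all add: dleq.top dleq.join_l)

lemma le_A_x: "i \<in> {1,2,3} \<Longrightarrow> dleq (Gx i) (atom_A i j n)"
  by (rule dleq.trans[OF dleq.gen le_A_y])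

lemma le_A_xy: assumes "k = third i j" shows "dleq (Meet (Gx j) (Gy k)) (atom_A i j n)"
proof (cases n)
  case (Suc m)
  have h: "dleq (Meet (Gx j) (Gy k)) (Meet (Gx j) (atom_A k i m))"
    by (rule dleq.meet_glb[OF dleq.meet_l dleq.trans[OF dleq.meet_r le_A_y]])
  show ?thesis unfolding Suc atom_A.simps assms[symmetric] by (rule dleq.trans[OF h dleq.join_r])
qed (simp add: dleq.top)

theorem mainTheorem11:
  fixes scale :: "'k::field \<Rightarrow> 'v::ab_group_add \<Rightarrow> 'v"
    and B :: "'v set" and X Y :: "nat \<Rightarrow> 'v set"
    and i j k n :: nat
  assumes ijk: "{i, j, k} = {1, 2, 3}"
    and rep: "is_rep scale B X Y"
  shows "(\<forall>p. wf_term p \<longrightarrow> coord i ` PhiP X Y (Meet (atom_a i j n) p)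
              = coord i ` PhiP X Y (atom_a i j n) \<inter> coord i ` PhiP X Y p) \<and>
        (\<forall>p. wf_term p \<longrightarrow> coord j ` PhiP X Y (Meet (atom_a i j n) p)
              = coord j ` PhiP X Y (atom_a i j n) \<inter> coord j ` PhiP X Y p) \<and>
        (\<forall>p. wf_term p \<longrightarrow> coord i ` PhiP X Y (Meet (atom_A i j n) p)
              = coord i ` PhiP X Y (atom_A i j n) \<inter> coord i ` PhiP X Y p) \<and>
        (\<forall>p. wf_term p \<and> dleq p (Gy k) \<longrightarrow>
           coord j ` PhiP X Y (Meet (atom_A i j n) p)
              = coord j ` PhiP X Y (Meet (Gy k) (atom_A i j n)) \<inter> coord j ` PhiP X Y p)"
proof -
  have m: "i \<in> {1,2,3}" "j \<in> {1,2,3}" "k \<in> {1,2,3}" using ijk by blast+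
  have c: "1 \<in> {i,j,k}" "2 \<in> {i,j,k}" "3 \<in> {i,j,k}" using ijk by simp_all
  have m': "1 \<le> i \<and> i \<le> 3" "1 \<le> j \<and> j \<le> 3" "1 \<le> k \<and> k \<le> 3" using m by auto
  have c': "i = 1 \<or> j = 1 \<or> k = 1" "i = 2 \<or> j = 2 \<or> k = 2" "i = 3 \<or> j = 3 \<or> k = 3" using c by auto
  have d: "i \<noteq> j" "i \<noteq> k" "j \<noteq> k" "k = third i j" using m' c' unfolding third_def by auto
  have md: "module scale" using rep
    by (simp add: is_rep_def finite_dimensional_vector_space_def vector_space_def module_def)
  have sub: "\<And>l. l \<in> {1,2,3} \<Longrightarrow> grp (X l) \<and> grp (Y l) \<and> X l \<subseteq> Y l"
    using rep md unfolding is_rep_def grp_def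
    by (meson module.subspace_0 module.subspace_add module.subspace_diff)
  define T where "T = X01 Y"
  define Xs where "Xs = (\<lambda>l. if l \<in> {1,2,3} then phiX Y l else {0})"
  define Ys where "Ys = (\<lambda>l. if l \<in> {1,2,3} then phiY X Y l else {0})"
  have gT: "grp T"
  proof -
    have z: "(0::'v\<times>'v\<times>'v) \<in> X01 Y" using sub unfolding X01_def grp_def coord_def by auto
    have ad: "a + b \<in> X01 Y \<and> a - b \<in> X01 Y" if "a \<in> X01 Y" "b \<in> X01 Y" for a b
    proof -
      have c: "\<forall>l\<in>{1,2,3}. coord l (a+b) \<in> Y l \<and> coord l (a-b) \<in> Y l"
        using that sub unfolding X01_def grp_def coord_add coord_diff by blast
      have s1: "fst (a+b) + fst (snd (a+b)) + snd (snd (a+b)) =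
          (fst a + fst (snd a) + snd (snd a)) + (fst b + fst (snd b) + snd (snd b))"
        by (simp add: algebra_simps)
      have s2: "fst (a-b) + fst (snd (a-b)) + snd (snd (a-b)) =
          (fst a + fst (snd a) + snd (snd a)) - (fst b + fst (snd b) + snd (snd b))"
        by (simp add: algebra_simps)
      have h: "fst a + fst (snd a) + snd (snd a) = 0" "fst b + fst (snd b) + snd (snd b) = 0"
        using that unfolding X01_def by auto
      have e1: "fst (a+b) + fst (snd (a+b)) + snd (snd (a+b)) = 0" unfolding s1 h by simp
      have e2: "fst (a-b) + fst (snd (a-b)) + snd (snd (a-b)) = 0" unfolding s2 h by simp
      show ?thesis unfolding X01_def mem_Collect_eq using c e1 e2 by blast
    qed
    show ?thesis unfolding grp_def T_def using z ad by blast
  qed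
  have gX: "\<And>l. grp (Xs l) \<and> Xs l \<subseteq> T"
    using gT unfolding Xs_def phiX_def T_def grp_def by (auto simp: coord_diff coord_add coord_zero)
  have gY: "\<And>l. grp (Ys l) \<and> Ys l \<subseteq> T"
    using gT sub unfolding Ys_def phiY_def T_def grp_def by (auto simp: coord_diff coord_add coord_zero)
  have XY: "\<And>l. l \<in> {1,2,3} \<Longrightarrow> Xs l \<subseteq> Ys l"
    using sub unfolding Xs_def Ys_def phiX_def phiY_def grp_def by auto
  have PE: "\<And>p. wf_term p \<Longrightarrow> PhiP X Y p = eval T Xs Ys p"
    unfolding PhiP_def T_def by (rule eval_cong) (auto simp: Xs_def Ys_def)
  have EG: "\<And>p. grp (eval T Xs Ys p) \<and> eval T Xs Ys p \<subseteq> T"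
    by (rule eval_grp[OF gT]) (use gX gY in auto)
  have DS: "\<And>p q. dleq p q \<Longrightarrow> eval T Xs Ys p \<subseteq> eval T Xs Ys q"
    by (rule dleq_sound[OF _ gT]) (use gX gY XY in auto)
  have sound: "PhiP X Y p \<subseteq> PhiP X Y q" if "dleq p q" "wf_term p" "wf_term q" for p q
    using DS[OF that(1)] PE[OF that(2)] PE[OF that(3)] by simp
  have gP: "grp (PhiP X Y p) \<and> PhiP X Y p \<subseteq> T" if "wf_term p" for p
    using EG[of p] PE[OF that] by simp
  have ker: "\<And>l a b. l \<in> {1,2,3} \<Longrightarrow> a \<in> T \<Longrightarrow> b \<in> T \<Longrightarrow> coord l a = coord l b \<Longrightarrow>
      b - a \<in> PhiP X Y (Gx l)"
    using gT unfolding PhiP_def phiX_def T_def grp_def by (auto simp: coord_diff)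
  have key: "\<And>l A. l \<in> {1,2,3} \<Longrightarrow> wf_term A \<Longrightarrow> dleq (Gx l) A \<Longrightarrow> wf_term p \<Longrightarrow>
      coord l ` PhiP X Y (Meet A p) = coord l ` PhiP X Y A \<inter> coord l ` PhiP X Y p" for p
  proof -
    fix l A assume l: "l \<in> {1,2,3}" and wA: "wf_term A" and le: "dleq (Gx l) A" and wp: "wf_term p"
    have inc: "PhiP X Y (Gx l) \<subseteq> PhiP X Y A" using sound[OF le] wA l by simp
    show "coord l ` PhiP X Y (Meet A p) = coord l ` PhiP X Y A \<inter> coord l ` PhiP X Y p"
      unfolding PhiP_def eval.simps
    proof (rule hom_lemma, unfold PhiP_def[symmetric])
      fix a b assume a: "a \<in> PhiP X Y A" and b: "b \<in> PhiP X Y p" and e: "coord l a = coord l b"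
      have "b - a \<in> PhiP X Y A" using ker[OF l _ _ e] a b gP[OF wA] gP[OF wp] inc by blast
      then have "a + (b - a) \<in> PhiP X Y A" using a gP[OF wA] unfolding grp_def by blast
      then show "b \<in> PhiP X Y A" by simp
    qed
  qed
  have wa: "wf_term (atom_a i j n)" and wA: "wf_term (atom_A i j n)"
    using wf_atom_a wf_atom_A m d by auto
  have P1: "\<forall>p. wf_term p \<longrightarrow> coord i ` PhiP X Y (Meet (atom_a i j n) p)
              = coord i ` PhiP X Y (atom_a i j n) \<inter> coord i ` PhiP X Y p"
    using key[OF m(1) wa le_a_x] by blast
  have P2: "\<forall>p. wf_term p \<longrightarrow> coord j ` PhiP X Y (Meet (atom_a i j n) p)
              = coord j ` PhiP X Y (atom_a i j n) \<inter> coord j ` PhiP X Y p"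
    using key[OF m(2) wa le_a_xj[OF m(2)]] by blast
  have P3: "\<forall>p. wf_term p \<longrightarrow> coord i ` PhiP X Y (Meet (atom_A i j n) p)
              = coord i ` PhiP X Y (atom_A i j n) \<inter> coord i ` PhiP X Y p"
    using key[OF m(1) wA le_A_x[OF m(1)]] by blast
  have P4: "\<forall>p. wf_term p \<and> dleq p (Gy k) \<longrightarrow>
           coord j ` PhiP X Y (Meet (atom_A i j n) p)
              = coord j ` PhiP X Y (Meet (Gy k) (atom_A i j n)) \<inter> coord j ` PhiP X Y p"
  proof (intro allI impI)
    fix p assume "wf_term p \<and> dleq p (Gy k)"
    then have wp: "wf_term p" and pk: "PhiP X Y p \<subseteq> PhiP X Y (Gy k)" using sound m by auto
    define A' where "A' = PhiP X Y (Meet (Gy k) (atom_A i j n))"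
    have wA': "wf_term (Meet (Gy k) (atom_A i j n))" using wA m by simp
    have eq: "PhiP X Y (Meet (atom_A i j n) p) = A' \<inter> PhiP X Y p"
      using pk unfolding A'_def PhiP_def by auto
    have le: "dleq (Meet (Gx j) (Gy k)) (Meet (Gy k) (atom_A i j n))"
      by (rule dleq.meet_glb[OF dleq.meet_r le_A_xy[OF d(4)]])
    have inc: "PhiP X Y (Meet (Gx j) (Gy k)) \<subseteq> A'" unfolding A'_def
      using sound[OF le] wA' m by simp
    show "coord j ` PhiP X Y (Meet (atom_A i j n) p)
              = coord j ` PhiP X Y (Meet (Gy k) (atom_A i j n)) \<inter> coord j ` PhiP X Y p"
      unfolding eq A'_def[symmetric]
    proof (rule hom_lemma)
      fix a b assume a: "a \<in> A'" and b: "b \<in> PhiP X Y p" and e: "coord j a = coord j b"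
      have aT: "a \<in> T" "a \<in> PhiP X Y (Gy k)" using a gP[OF wA'] unfolding A'_def PhiP_def by auto
      have bT: "b \<in> T" "b \<in> PhiP X Y (Gy k)" using b gP[OF wp] pk by auto
      have "b - a \<in> PhiP X Y (Gy k)" using aT bT gP[of "Gy k"] m unfolding grp_def by auto
      moreover have "b - a \<in> PhiP X Y (Gx j)" using ker[OF m(2) aT(1) bT(1) e] .
      ultimately have "b - a \<in> A'" using inc unfolding PhiP_def by auto
      then have "a + (b - a) \<in> A'" using a gP[OF wA'] unfolding grp_def A'_def by blast
      then show "b \<in> A'" by simp
    qed
  qed
  show ?thesis using P1 P2 P3 P4 by blast
qed

end
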